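(* Let $t>0$ be an integer. There is a constant $C_t$ such that the following holds. Let $M$ be an $n\times n$ $0$-$1$ matrix for which there do not exist $t$ rows $r_1,\dots,r_t$ and $t$ columns $c_1,\dots,c_t$ such that row $r_i$ and column $c_j$ cross for every $1\le i,j\le t$. Then $M$ has at most $C_t n$ entries equal to $1$.
   Context: In a $0$-$1$ matrix $M$, row $i$ and column $j$ cross if $M_{ij}=1$, or if there exist indices $i_1<i<i_2$ and $j_1<j<j_2$ with $M_{ij_1}=M_{ij_2}=M_{i_1j}=M_{i_2j}=1$. *)

theory Defs
  imports Complex_Main
begin

text \<open>A 0-1 matrix of size n x n is represented by M :: nat \<Rightarrow> nat \<Rightarrow> bool,
  with entries M i j for i < n, j < n (True = 1). Entries outside are ignored.\<close>

definition crosses :: "nat \<Rightarrow> (nat \<Rightarrow> nat \<Rightarrow> bool) \<Rightarrow> nat \<Rightarrow> nat \<Rightarrow> bool" where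
  "crosses n M i j \<longleftrightarrow> M i j \<or>
     (\<exists>i1 i2 j1 j2. i1 < i \<and> i < i2 \<and> i2 < n \<and> j1 < j \<and> j < j2 \<and> j2 < n \<and>
        M i j1 \<and> M i j2 \<and> M i1 j \<and> M i2 j)"

definition ones :: "nat \<Rightarrow> (nat \<Rightarrow> nat \<Rightarrow> bool) \<Rightarrow> nat" where
  "ones n M = card {(i, j). i < n \<and> j < n \<and> M i j}"

end

theory Submission
  imports Defs
begin


datatype seg = Seg (pos: nat) (lo: nat) (hi: nat)

definition cr :: "seg \<Rightarrow> seg \<Rightarrow> bool" where
  "cr r c \<longleftrightarrow> lo r \<le> pos c \<and> pos c \<le> hi r \<and> lo c \<le> pos r \<and> pos r \<le> hi c"

definition pres :: "seg \<Rightarrow> nat \<Rightarrow> bool" where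
  "pres r x \<longleftrightarrow> lo r \<le> x \<and> x \<le> hi r"

definition Kb :: "nat \<Rightarrow> nat \<Rightarrow> seg set \<Rightarrow> seg set \<Rightarrow> bool" where
  "Kb a b R C \<longleftrightarrow> (\<exists>R'\<subseteq>R. \<exists>C'\<subseteq>C. card R' = a \<and> card C' = b \<and> (\<forall>r\<in>R'. \<forall>c\<in>C'. cr r c))"

definition XX :: "seg set \<Rightarrow> seg set \<Rightarrow> nat" where
  "XX R C = card {(r,c)\<in>R\<times>C. cr r c}"

locale fam =
  fixes R C :: "seg set"
  assumes finR: "finite R" and finC: "finite C"
  and disjR: "\<And>r1 r2 x. r1\<in>R \<Longrightarrow> r2\<in>R \<Longrightarrow> pos r1 = pos r2 \<Longrightarrow> pres r1 x \<Longrightarrow> pres r2 x \<Longrightarrow> r1 = r2"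
  and injC: "\<And>c1 c2. c1\<in>C \<Longrightarrow> c2\<in>C \<Longrightarrow> pos c1 = pos c2 \<Longrightarrow> c1 = c2"
begin

lemma rows_eq_cr: "r1\<in>R \<Longrightarrow> r2\<in>R \<Longrightarrow> cr r1 c \<Longrightarrow> cr r2 c \<Longrightarrow> pos r1 = pos r2 \<Longrightarrow> r1 = r2"
  using disjR[of r1 r2 "pos c"] by (auto simp: cr_def pres_def)

definition below :: "seg \<Rightarrow> seg \<Rightarrow> seg set" where
  "below h c = {r\<in>R. cr r c \<and> pos h < pos r}"

definition nxt :: "seg \<Rightarrow> seg \<Rightarrow> seg option" where
  "nxt h c = (if below h c = {} then None
     else Some (SOME g. g \<in> below h c \<and> (\<forall>r\<in>below h c. pos g \<le> pos r)))"

lemma below_min: assumes "below h c \<noteq> {}"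
  shows "\<exists>g. g \<in> below h c \<and> (\<forall>r\<in>below h c. pos g \<le> pos r)"
proof -
  have fin: "finite (below h c)" using finR by (simp add: below_def)
  have "Min (pos ` below h c) \<in> pos ` below h c" using fin assms by (intro Min_in) auto
  then obtain g where "g \<in> below h c" "pos g = Min (pos ` below h c)" by auto
  then show ?thesis using fin by auto
qed

lemma nxt_Some: assumes "nxt h c = Some g"
  shows "g\<in>R" "cr g c" "pos h < pos g" "\<And>r. r\<in>R \<Longrightarrow> cr r c \<Longrightarrow> pos h < pos r \<Longrightarrow> pos g \<le> pos r"
proof -
  have ne: "below h c \<noteq> {}" using assms by (auto simp: nxt_def split: if_splits)
  have g: "g = (SOME g. g \<in> below h c \<and> (\<forall>r\<in>below h c. pos g \<le> pos r))"
    using assms ne by (simp add: nxt_def)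
  have "g \<in> below h c \<and> (\<forall>r\<in>below h c. pos g \<le> pos r)"
    unfolding g by (rule someI_ex[OF below_min[OF ne]])
  then show "g\<in>R" "cr g c" "pos h < pos g" "\<And>r. r\<in>R \<Longrightarrow> cr r c \<Longrightarrow> pos h < pos r \<Longrightarrow> pos g \<le> pos r"
    by (auto simp: below_def)
qed

lemma nxt_None: "nxt h c = None \<Longrightarrow> r\<in>R \<Longrightarrow> cr r c \<Longrightarrow> pos h < pos r \<Longrightarrow> False"
  by (auto simp: nxt_def below_def split: if_splits)

lemma nxt_NoneI: "(\<And>r. r\<in>R \<Longrightarrow> cr r c \<Longrightarrow> pos h < pos r \<Longrightarrow> False) \<Longrightarrow> nxt h c = None"
  by (auto simp: nxt_def below_def)

definition sim :: "seg \<Rightarrow> seg \<Rightarrow> seg \<Rightarrow> bool" where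
  "sim h c1 c2 \<longleftrightarrow> (\<forall>c\<in>C. cr h c \<and> min (pos c1) (pos c2) \<le> pos c \<and> pos c \<le> max (pos c1) (pos c2)
      \<longrightarrow> nxt h c = nxt h c1)"

lemma sim_refl: "c\<in>C \<Longrightarrow> sim h c c"
  unfolding sim_def using injC by (metis le_antisym max.idem min.idem)

lemma sim_lab: "sim h a b \<Longrightarrow> b\<in>C \<Longrightarrow> cr h b \<Longrightarrow> nxt h b = nxt h a"
  unfolding sim_def by auto

lemma sim_sym: assumes "sim h a b" "b\<in>C" "cr h b" shows "sim h b a"
  unfolding sim_def
proof (intro ballI impI)
  fix c assume c: "c\<in>C" "cr h c \<and> min (pos b) (pos a) \<le> pos c \<and> pos c \<le> max (pos b) (pos a)"
  have "nxt h c = nxt h a" using assms(1) c unfolding sim_def by (simp add: min.commute max.commute)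
  moreover have "nxt h b = nxt h a" by (rule sim_lab[OF assms])
  ultimately show "nxt h c = nxt h b" by simp
qed

lemma sim_trans: assumes "sim h a b" "sim h b c" "b\<in>C" "cr h b" shows "sim h a c"
  unfolding sim_def
proof (intro ballI impI)
  fix d assume d: "d\<in>C" "cr h d \<and> min (pos a) (pos c) \<le> pos d \<and> pos d \<le> max (pos a) (pos c)"
  have ba: "nxt h b = nxt h a" using sim_lab[OF assms(1,3,4)] .
  show "nxt h d = nxt h a"
  proof (cases "min (pos a) (pos b) \<le> pos d \<and> pos d \<le> max (pos a) (pos b)")
    case True then show ?thesis using assms(1) d unfolding sim_def by blast
  next
    case False
    then have "min (pos b) (pos c) \<le> pos d \<and> pos d \<le> max (pos b) (pos c)" using d by auto
    then have "nxt h d = nxt h b" using assms(2) d unfolding sim_def by blast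
    then show ?thesis using ba by simp
  qed
qed


definition cls :: "seg \<Rightarrow> seg \<Rightarrow> seg set" where
  "cls h w = {c\<in>C. cr h c \<and> sim h c w}"

definition run :: "seg \<Rightarrow> seg \<Rightarrow> seg" where
  "run h w = Seg (pos h) (Min (pos ` cls h w)) (Max (pos ` cls h w))"

lemma cls_fin: "finite (cls h w)" using finC by (simp add: cls_def)

lemma cls_self: "w\<in>C \<Longrightarrow> cr h w \<Longrightarrow> w \<in> cls h w"
  by (simp add: cls_def sim_refl)

lemma run_lo_in: assumes "w\<in>C" "cr h w" shows "\<exists>c\<in>cls h w. pos c = lo (run h w)"
proof -
  have "Min (pos ` cls h w) \<in> pos ` cls h w" using cls_fin cls_self[OF assms] by (intro Min_in) auto
  then show ?thesis by (auto simp: run_def)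
qed

lemma run_hi_in: assumes "w\<in>C" "cr h w" shows "\<exists>c\<in>cls h w. pos c = hi (run h w)"
proof -
  have "Max (pos ` cls h w) \<in> pos ` cls h w" using cls_fin cls_self[OF assms] by (intro Max_in) auto
  then show ?thesis by (auto simp: run_def)
qed

lemma run_w: assumes "w\<in>C" "cr h w" shows "lo (run h w) \<le> pos w" "pos w \<le> hi (run h w)"
  using cls_fin cls_self[OF assms] by (auto simp: run_def)

lemma run_pos[simp]: "pos (run h w) = pos h" by (simp add: run_def)

lemma cls_sim: "c \<in> cls h w \<Longrightarrow> c\<in>C \<and> cr h c \<and> sim h c w" by (simp add: cls_def)

lemma run_in_h: assumes "w\<in>C" "cr h w" shows "lo h \<le> lo (run h w)" "hi (run h w) \<le> hi h"
proof -
  obtain c1 where "c1\<in>cls h w" "pos c1 = lo (run h w)" using run_lo_in[OF assms] by blast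
  then show "lo h \<le> lo (run h w)" using cls_sim[of c1] by (auto simp: cr_def)
  obtain c2 where "c2\<in>cls h w" "pos c2 = hi (run h w)" using run_hi_in[OF assms] by blast
  then show "hi (run h w) \<le> hi h" using cls_sim[of c2] by (auto simp: cr_def)
qed

lemma run_uniform: assumes "w\<in>C" "cr h w" "c\<in>C" "cr h c" "lo (run h w) \<le> pos c" "pos c \<le> hi (run h w)"
  shows "sim h c w"
proof -
  obtain c1 where c1: "c1\<in>cls h w" "pos c1 = lo (run h w)" using run_lo_in[OF assms(1,2)] by blast
  obtain c2 where c2: "c2\<in>cls h w" "pos c2 = hi (run h w)" using run_hi_in[OF assms(1,2)] by blast
  have s1: "sim h c1 w" and s2: "sim h c2 w" using c1 c2 cls_sim by auto
  have s2': "sim h w c2" using sim_sym[OF s2 assms(1,2)] .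
  have s12: "sim h c1 c2" using sim_trans[OF s1 s2' assms(1,2)] .
  have wr: "pos c1 \<le> pos w" "pos w \<le> pos c2" using run_w[OF assms(1,2)] c1 c2 by auto
  have cr12: "pos c1 \<le> pos c" "pos c \<le> pos c2" using assms(5,6) c1 c2 by auto
  have lab: "\<And>d. d\<in>C \<Longrightarrow> cr h d \<Longrightarrow> pos c1 \<le> pos d \<Longrightarrow> pos d \<le> pos c2 \<Longrightarrow> nxt h d = nxt h c1"
    using s12 unfolding sim_def by auto
  show ?thesis unfolding sim_def
  proof (intro ballI impI)
    fix d assume d: "d\<in>C" "cr h d \<and> min (pos c) (pos w) \<le> pos d \<and> pos d \<le> max (pos c) (pos w)"
    have "nxt h d = nxt h c1" using lab[of d] d wr cr12 by auto
    moreover have "nxt h c = nxt h c1" using lab[of c] assms(3,4) cr12 by auto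
    ultimately show "nxt h d = nxt h c" by simp
  qed
qed

lemma cls_eq: assumes "w\<in>C" "cr h w" "c\<in>C" "cr h c" "sim h c w" shows "cls h c = cls h w"
proof
  show "cls h c \<subseteq> cls h w"
  proof
    fix x assume "x \<in> cls h c"
    then have "x\<in>C" "cr h x" "sim h x c" using cls_sim by auto
    then show "x \<in> cls h w" using sim_trans[OF \<open>sim h x c\<close> assms(5,3,4)] by (simp add: cls_def)
  qed
next
  show "cls h w \<subseteq> cls h c"
  proof
    fix x assume "x \<in> cls h w"
    then have "x\<in>C" "cr h x" "sim h x w" using cls_sim by auto
    have "sim h w c" using sim_sym[OF assms(5,1,2)] .
    then show "x \<in> cls h c" using sim_trans[OF \<open>sim h x w\<close> _ assms(1,2)] \<open>x\<in>C\<close> \<open>cr h x\<close>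
      by (simp add: cls_def)
  qed
qed

lemma run_eq: "w\<in>C \<Longrightarrow> cr h w \<Longrightarrow> c\<in>C \<Longrightarrow> cr h c \<Longrightarrow> sim h c w \<Longrightarrow> run h c = run h w"
  using cls_eq by (simp add: run_def)

lemma run_cr: assumes "w\<in>C" "cr h w" "c\<in>C" "cr (run h w) c" shows "cr h c" "sim h c w"
proof -
  have a: "lo (run h w) \<le> pos c" "pos c \<le> hi (run h w)" "lo c \<le> pos h" "pos h \<le> hi c"
    using assms(4) by (auto simp: cr_def)
  then show "cr h c" using run_in_h[OF assms(1,2)] by (auto simp: cr_def)
  then show "sim h c w" using run_uniform[OF assms(1,2,3)] a by auto
qed

lemma run_cr_self: "w\<in>C \<Longrightarrow> cr h w \<Longrightarrow> cr (run h w) w"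
  using run_w[of w h] by (auto simp: cr_def)

definition Rd :: "seg set" where
  "Rd = {run h w | h w. h\<in>R \<and> w\<in>C \<and> cr h w \<and> nxt h w \<noteq> None}"

lemma Rd_fin: "finite Rd"
proof -
  have "Rd \<subseteq> (\<lambda>(h,w). run h w) ` (R \<times> C)" by (auto simp: Rd_def)
  then show ?thesis using finR finC finite_subset by blast
qed

lemma Rd_disj: assumes "r1\<in>Rd" "r2\<in>Rd" "pos r1 = pos r2" "pres r1 x" "pres r2 x" shows "r1 = r2"
proof -
  obtain h1 w1 where 1: "r1 = run h1 w1" "h1\<in>R" "w1\<in>C" "cr h1 w1" using assms(1) by (auto simp: Rd_def)
  obtain h2 w2 where 2: "r2 = run h2 w2" "h2\<in>R" "w2\<in>C" "cr h2 w2" using assms(2) by (auto simp: Rd_def)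
  have "pres h1 x" using run_in_h[OF 1(3,4)] assms(4) 1(1) by (auto simp: pres_def)
  moreover have "pres h2 x" using run_in_h[OF 2(3,4)] assms(5) 2(1) by (auto simp: pres_def)
  ultimately have hh: "h1 = h2" using disjR 1 2 assms(3) by auto
  have gen: "run h w = run h w'" if H: "w\<in>C" "cr h w" "w'\<in>C" "cr h w'" "lo (run h w) \<le> lo (run h w')"
    "lo (run h w') \<le> hi (run h w)" for h w w'
  proof -
    obtain c where c: "c\<in>cls h w'" "pos c = lo (run h w')" using run_lo_in[OF H(3,4)] by blast
    have cc: "c\<in>C" "cr h c" "sim h c w'" using cls_sim[OF c(1)] by auto
    have "sim h c w" using run_uniform[OF H(1,2) cc(1,2)] c H(5,6) by auto
    then have "run h c = run h w" using run_eq[OF H(1,2) cc(1,2)] by simp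
    moreover have "run h c = run h w'" using run_eq[OF H(3,4) cc(1,2,3)] .
    ultimately show ?thesis by simp
  qed
  have x1: "lo r1 \<le> x" "x \<le> hi r1" and x2: "lo r2 \<le> x" "x \<le> hi r2" using assms(4,5) by (auto simp: pres_def)
  show ?thesis
  proof (cases "lo r1 \<le> lo r2")
    case True then show ?thesis using gen[of w1 h1 w2] 1 2 hh x1 x2 by auto
  next
    case False then show ?thesis using gen[of w2 h1 w1] 1 2 hh x1 x2 by auto
  qed
qed

lemma Rd_fam: "fam Rd C"
  using Rd_fin finC Rd_disj injC by (unfold_locales) auto

lemma XX_step: "XX R C \<le> card C + XX Rd C"
proof -
  let ?S = "{(r,c)\<in>R\<times>C. cr r c}"
  let ?A = "{(r,c)\<in>R\<times>C. cr r c \<and> nxt r c = None}"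
  let ?B = "{(r,c)\<in>R\<times>C. cr r c \<and> nxt r c \<noteq> None}"
  have S: "?S = ?A \<union> ?B" by auto
  have "inj_on snd ?A"
  proof (rule inj_onI)
    fix p q assume p: "p \<in> ?A" and q: "q \<in> ?A" and e: "snd p = snd q"
    obtain h1 c where "p = (h1,c)" "h1\<in>R" "c\<in>C" "cr h1 c" "nxt h1 c = None" using p by auto
    moreover obtain h2 where "q = (h2,c)" "h2\<in>R" "cr h2 c" "nxt h2 c = None" using q e \<open>p = (h1,c)\<close> by auto
    moreover have "pos h1 = pos h2"
    proof (rule ccontr)
      assume ne: "pos h1 \<noteq> pos h2"
      show False
      proof (cases "pos h1 < pos h2")
        case True then show False using nxt_None[of h1 c h2] calculation by blast
      next
        case False then have "pos h2 < pos h1" using ne by simp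
        then show False using nxt_None[of h2 c h1] calculation by blast
      qed
    qed
    ultimately show "p = q" using rows_eq_cr by auto
  qed
  moreover have "snd ` ?A \<subseteq> C" by auto
  ultimately have A: "card ?A \<le> card C" using card_inj_on_le finC by blast
  let ?f = "\<lambda>(h,c). (run h c, c)"
  have "inj_on ?f ?B"
  proof (rule inj_onI)
    fix p q assume p: "p \<in> ?B" and q: "q \<in> ?B" and e: "?f p = ?f q"
    obtain h1 c1 where 1: "p = (h1,c1)" "h1\<in>R" "c1\<in>C" "cr h1 c1" using p by auto
    obtain h2 c2 where 2: "q = (h2,c2)" "h2\<in>R" "c2\<in>C" "cr h2 c2" using q by auto
    have "c1 = c2" "run h1 c1 = run h2 c2" using e 1 2 by auto
    then have "pos h1 = pos h2" by (metis run_pos)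
    then show "p = q" using rows_eq_cr 1 2 \<open>c1 = c2\<close> by auto
  qed
  moreover have "?f ` ?B \<subseteq> {(r,c)\<in>Rd\<times>C. cr r c}"
    by (auto simp: Rd_def intro!: run_cr_self)
  moreover have "finite {(r,c)\<in>Rd\<times>C. cr r c}"
    by (rule finite_subset[of _ "Rd \<times> C"]) (use Rd_fin finC in auto)
  ultimately have B: "card ?B \<le> XX Rd C" unfolding XX_def using card_inj_on_le by blast
  have "card ?S \<le> card ?A + card ?B" unfolding S by (rule card_Un_le)
  then show ?thesis using A B unfolding XX_def by linarith
qed

lemma Kext: assumes K: "Kb (Suc a) t Rd C" and t: "t \<ge> 1" shows "Kb (Suc (Suc a)) t R C"
proof -
  obtain R2 C2 where R2: "R2 \<subseteq> Rd" "C2 \<subseteq> C" "card R2 = Suc a" "card C2 = t"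
    and all: "\<forall>r\<in>R2. \<forall>c\<in>C2. cr r c" using K by (auto simp: Kb_def)
  have finR2: "finite R2" "R2 \<noteq> {}" using R2(3) card.infinite by force+
  have "C2 \<noteq> {}" using R2(4) t by auto
  then obtain c0 where c0: "c0 \<in> C2" by blast
  have "Max (pos ` R2) \<in> pos ` R2" using finR2 by (intro Max_in) auto
  then obtain rs where rs: "rs \<in> R2" "pos rs = Max (pos ` R2)" by auto
  have rsmax: "\<And>r. r\<in>R2 \<Longrightarrow> pos r \<le> pos rs" using rs finR2 by auto
  obtain hs ws where hs: "rs = run hs ws" "hs\<in>R" "ws\<in>C" "cr hs ws" "nxt hs ws \<noteq> None"
    using rs(1) R2(1) by (auto simp: Rd_def)
  obtain g where g: "nxt hs ws = Some g" using hs(5) by auto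
  have gR: "g\<in>R" and gpos: "pos hs < pos g" using nxt_Some[OF g] by auto
  have gcr: "cr g c" if "c \<in> C2" for c
  proof -
    have cC: "c\<in>C" using that R2(2) by auto
    have "cr rs c" using all rs(1) that by auto
    then have "sim hs c ws" using run_cr[OF hs(3,4) cC] hs(1) by auto
    then have "nxt hs c = Some g" using sim_lab[of hs c ws] hs g by simp
    then show ?thesis using nxt_Some by auto
  qed
  have "\<forall>r\<in>Rd. \<exists>h. h\<in>R \<and> pos h = pos r \<and> (\<forall>c\<in>C. cr r c \<longrightarrow> cr h c)"
  proof
    fix r assume "r \<in> Rd"
    then obtain h w where "r = run h w" "h\<in>R" "w\<in>C" "cr h w" by (auto simp: Rd_def)
    then show "\<exists>h. h\<in>R \<and> pos h = pos r \<and> (\<forall>c\<in>C. cr r c \<longrightarrow> cr h c)"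
      using run_cr(1)[of w h] by (intro exI[of _ h]) simp
  qed
  then obtain f where f: "\<And>r. r\<in>Rd \<Longrightarrow> f r \<in> R \<and> pos (f r) = pos r \<and> (\<forall>c\<in>C. cr r c \<longrightarrow> cr (f r) c)"
    by metis
  have inj: "inj_on f R2"
  proof (rule inj_onI)
    fix r1 r2 assume r: "r1 \<in> R2" "r2 \<in> R2" "f r1 = f r2"
    have "r1 \<in> Rd" "r2 \<in> Rd" using r R2(1) by auto
    then have "pos r1 = pos r2" using f[of r1] f[of r2] r(3) by metis
    moreover have "pres r1 (pos c0)" "pres r2 (pos c0)" using all r c0 by (auto simp: cr_def pres_def)
    ultimately show "r1 = r2" using Rd_disj r R2(1) by auto
  qed
  have gnot: "g \<notin> f ` R2"
  proof
    assume "g \<in> f ` R2"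
    then obtain r where "r\<in>R2" "g = f r" by auto
    then have "pos g = pos r" using f R2(1) by auto
    then show False using rsmax[OF \<open>r\<in>R2\<close>] hs(1) gpos by simp
  qed
  let ?R0 = "insert g (f ` R2)"
  have "?R0 \<subseteq> R" using gR f R2(1) by auto
  moreover have "card ?R0 = Suc (Suc a)"
    using gnot card_image[OF inj] R2(3) finR2 by simp
  moreover have "\<forall>r\<in>?R0. \<forall>c\<in>C2. cr r c"
  proof (intro ballI)
    fix r c assume r: "r \<in> ?R0" and c: "c \<in> C2"
    show "cr r c"
    proof (cases "r = g")
      case True then show ?thesis using gcr c by simp
    next
      case False
      then obtain r' where r': "r' \<in> R2" "r = f r'" using r by auto
      then have "cr r' c" using all c by auto
      then show ?thesis using f[of r'] r' R2(1,2) c by auto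
    qed
  qed
  ultimately show ?thesis using R2(2,4) unfolding Kb_def by blast
qed


end



context fam begin

lemma none_unique: "h1\<in>R \<Longrightarrow> h2\<in>R \<Longrightarrow> cr h1 p \<Longrightarrow> cr h2 p \<Longrightarrow> nxt h1 p = None \<Longrightarrow> nxt h2 p = None \<Longrightarrow> h1 = h2"
proof -
  assume a: "h1\<in>R" "h2\<in>R" "cr h1 p" "cr h2 p" "nxt h1 p = None" "nxt h2 p = None"
  have "pos h1 = pos h2"
  proof (rule ccontr)
    assume ne: "pos h1 \<noteq> pos h2"
    show False
    proof (cases "pos h1 < pos h2")
      case True then show False using nxt_None[of h1 p h2] a by blast
    next
      case False then have "pos h2 < pos h1" using ne by simp
      then show False using nxt_None[of h2 p h1] a by blast
    qed
  qed
  then show "h1 = h2" using rows_eq_cr a by blast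
qed

definition ok :: "seg \<Rightarrow> seg \<Rightarrow> nat \<Rightarrow> bool" where
  "ok h g x \<longleftrightarrow> pres h x \<and> pres g x \<and> \<not>(\<exists>r\<in>R. pres r x \<and> pos h < pos r \<and> pos r < pos g)"

definition Vis :: "(seg \<times> seg) set" where
  "Vis = {(h,g). h\<in>R \<and> (\<exists>c\<in>C. cr h c \<and> nxt h c = Some g)}"

lemma vis_ok: assumes "cr h c" "nxt h c = Some g" shows "ok h g (pos c)"
proof -
  have g: "g\<in>R" "cr g c" "pos h < pos g" using nxt_Some[OF assms(2)] by auto
  have "\<not>(\<exists>r\<in>R. pres r (pos c) \<and> pos h < pos r \<and> pos r < pos g)"
  proof
    assume "\<exists>r\<in>R. pres r (pos c) \<and> pos h < pos r \<and> pos r < pos g"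
    then obtain r where r: "r\<in>R" "pres r (pos c)" "pos h < pos r" "pos r < pos g" by blast
    have "cr r c" using r assms(1) g(2) by (auto simp: cr_def pres_def)
    then show False using nxt_Some(4)[OF assms(2) r(1)] r by auto
  qed
  then show ?thesis using assms(1) g(2) by (auto simp: ok_def cr_def pres_def)
qed

lemma ok_g_unique: assumes "g1\<in>R" "g2\<in>R" "ok h g1 x" "ok h g2 x" "pos h < pos g1" "pos h < pos g2"
  shows "g1 = g2"
proof -
  have "pos g1 = pos g2"
  proof (rule ccontr)
    assume ne: "pos g1 \<noteq> pos g2"
    show False
    proof (cases "pos g1 < pos g2")
      case True then show False using assms unfolding ok_def by blast
    next
      case False then have "pos g2 < pos g1" using ne by simp
      then show False using assms unfolding ok_def by blast
    qed
  qed
  then show ?thesis using disjR assms unfolding ok_def by blast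
qed

lemma ok_h_unique: assumes "h1\<in>R" "h2\<in>R" "ok h1 g x" "ok h2 g x" "pos h1 < pos g" "pos h2 < pos g"
  shows "h1 = h2"
proof -
  have "pos h1 = pos h2"
  proof (rule ccontr)
    assume ne: "pos h1 \<noteq> pos h2"
    show False
    proof (cases "pos h1 < pos h2")
      case True then show False using assms unfolding ok_def by blast
    next
      case False then have "pos h2 < pos h1" using ne by simp
      then show False using assms unfolding ok_def by blast
    qed
  qed
  then show ?thesis using disjR assms unfolding ok_def by blast
qed

definition xs :: "seg \<Rightarrow> seg \<Rightarrow> nat" where "xs h g = (LEAST x. ok h g x)"

lemma Vis_facts: assumes "(h,g) \<in> Vis"
  shows "h\<in>R" "g\<in>R" "pos h < pos g" "ok h g (xs h g)" "\<And>y. y < xs h g \<Longrightarrow> \<not> ok h g y"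
proof -
  obtain c where c: "h\<in>R" "c\<in>C" "cr h c" "nxt h c = Some g" using assms by (auto simp: Vis_def)
  show "h\<in>R" "g\<in>R" "pos h < pos g" using c nxt_Some by auto
  have "ok h g (pos c)" using vis_ok c by auto
  then show "ok h g (xs h g)" unfolding xs_def by (rule LeastI)
  show "\<And>y. y < xs h g \<Longrightarrow> \<not> ok h g y" unfolding xs_def by (rule not_less_Least)
qed

definition kk :: "seg \<Rightarrow> seg \<Rightarrow> seg" where
  "kk h g = (SOME k. k\<in>R \<and> pres k (xs h g - 1) \<and> pos h < pos k \<and> pos k < pos g \<and>
     (\<forall>r\<in>R. pres r (xs h g - 1) \<and> pos h < pos r \<and> pos r < pos g \<longrightarrow> pos k \<le> pos r))"

lemma T3_facts: assumes "(h,g) \<in> Vis" "xs h g \<noteq> lo h" "xs h g \<noteq> lo g"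
  shows "kk h g \<in> R" "pres (kk h g) (xs h g - 1)" "pos h < pos (kk h g)" "pos (kk h g) < pos g"
    "\<And>r. r\<in>R \<Longrightarrow> pres r (xs h g - 1) \<Longrightarrow> pos h < pos r \<Longrightarrow> pos r < pos g \<Longrightarrow> pos (kk h g) \<le> pos r"
    "xs h g = Suc (hi (kk h g))" "pres h (xs h g - 1)"
proof -
  note V = Vis_facts[OF assms(1)]
  let ?x = "xs h g"
  have okx: "ok h g ?x" using V by simp
  have lt: "lo h < ?x" "lo g < ?x" using okx assms(2,3) unfolding ok_def pres_def by auto
  have ph: "pres h (?x - 1)" "pres g (?x - 1)" using okx lt unfolding ok_def pres_def by auto
  then show "pres h (xs h g - 1)" by simp
  have "\<not> ok h g (?x - 1)" using V(5) lt by simp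
  then have ex: "\<exists>r\<in>R. pres r (?x - 1) \<and> pos h < pos r \<and> pos r < pos g" using ph unfolding ok_def by blast
  let ?S = "{r\<in>R. pres r (?x - 1) \<and> pos h < pos r \<and> pos r < pos g}"
  have fin: "finite ?S" using finR by simp
  have "Min (pos ` ?S) \<in> pos ` ?S" using fin ex by (intro Min_in) auto
  then obtain k0 where k0: "k0 \<in> ?S" "pos k0 = Min (pos ` ?S)" by auto
  have "\<exists>k. k\<in>R \<and> pres k (?x - 1) \<and> pos h < pos k \<and> pos k < pos g \<and>
     (\<forall>r\<in>R. pres r (?x - 1) \<and> pos h < pos r \<and> pos r < pos g \<longrightarrow> pos k \<le> pos r)"
    using k0 fin by (intro exI[of _ k0]) auto
  then have K: "kk h g\<in>R \<and> pres (kk h g) (?x - 1) \<and> pos h < pos (kk h g) \<and> pos (kk h g) < pos g \<and>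
     (\<forall>r\<in>R. pres r (?x - 1) \<and> pos h < pos r \<and> pos r < pos g \<longrightarrow> pos (kk h g) \<le> pos r)"
    unfolding kk_def by (rule someI_ex)
  then show "kk h g \<in> R" "pres (kk h g) (xs h g - 1)" "pos h < pos (kk h g)" "pos (kk h g) < pos g"
    "\<And>r. r\<in>R \<Longrightarrow> pres r (xs h g - 1) \<Longrightarrow> pos h < pos r \<Longrightarrow> pos r < pos g \<Longrightarrow> pos (kk h g) \<le> pos r"
    by auto
  have "\<not> pres (kk h g) ?x" using okx K unfolding ok_def by blast
  then show "xs h g = Suc (hi (kk h g))" using K lt unfolding pres_def by auto
qed

lemma Vis_card: "card Vis \<le> 3 * card R"
proof -
  let ?T1 = "{p\<in>Vis. xs (fst p) (snd p) = lo (fst p)}"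
  let ?T2 = "{p\<in>Vis. xs (fst p) (snd p) = lo (snd p)}"
  let ?T3 = "{p\<in>Vis. xs (fst p) (snd p) \<noteq> lo (fst p) \<and> xs (fst p) (snd p) \<noteq> lo (snd p)}"
  have finV: "finite Vis"
    by (rule finite_subset[of _ "R \<times> R"]) (use finR nxt_Some in \<open>auto simp: Vis_def\<close>)
  have U: "Vis = ?T1 \<union> ?T2 \<union> ?T3" by auto
  have c1: "card ?T1 \<le> card R"
  proof (rule card_inj_on_le[OF _ _ finR])
    show "inj_on fst ?T1"
    proof (rule inj_onI)
      fix p q assume p: "p \<in> ?T1" and q: "q \<in> ?T1" and e: "fst p = fst q"
      obtain h g1 g2 where pq: "p = (h,g1)" "q = (h,g2)" using e by (metis prod.collapse)
      note V1 = Vis_facts[of h g1] and V2 = Vis_facts[of h g2]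
      have "ok h g1 (lo h)" "ok h g2 (lo h)" using p q pq V1(4) V2(4) by auto
      then show "p = q" using ok_g_unique[of g1 g2 h "lo h"] V1 V2 p q pq by auto
    qed
    show "fst ` ?T1 \<subseteq> R" using Vis_facts by force
  qed
  have c2: "card ?T2 \<le> card R"
  proof (rule card_inj_on_le[OF _ _ finR])
    show "inj_on snd ?T2"
    proof (rule inj_onI)
      fix p q assume p: "p \<in> ?T2" and q: "q \<in> ?T2" and e: "snd p = snd q"
      obtain g h1 h2 where pq: "p = (h1,g)" "q = (h2,g)" using e by (metis prod.collapse)
      note V1 = Vis_facts[of h1 g] and V2 = Vis_facts[of h2 g]
      have "ok h1 g (lo g)" "ok h2 g (lo g)" using p q pq V1(4) V2(4) by auto
      then show "p = q" using ok_h_unique[of h1 h2 g "lo g"] V1 V2 p q pq by auto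
    qed
    show "snd ` ?T2 \<subseteq> R" using Vis_facts by force
  qed
  have c3: "card ?T3 \<le> card R"
  proof (rule card_inj_on_le[OF _ _ finR])
    show "inj_on (\<lambda>p. kk (fst p) (snd p)) ?T3"
    proof (rule inj_onI)
      fix p q assume p: "p \<in> ?T3" and q: "q \<in> ?T3" and e: "kk (fst p) (snd p) = kk (fst q) (snd q)"
      obtain h1 g1 h2 g2 where pq: "p = (h1,g1)" "q = (h2,g2)" by (metis prod.collapse)
      have P: "(h1,g1)\<in>Vis" "xs h1 g1 \<noteq> lo h1" "xs h1 g1 \<noteq> lo g1" using p pq by auto
      have Q: "(h2,g2)\<in>Vis" "xs h2 g2 \<noteq> lo h2" "xs h2 g2 \<noteq> lo g2" using q pq by auto
      note A = T3_facts[OF P] and B = T3_facts[OF Q]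
      note VA = Vis_facts[OF P(1)] and VB = Vis_facts[OF Q(1)]
      define k where "k = kk h1 g1"
      have kB: "k = kk h2 g2" using e pq k_def by simp
      have xeq: "xs h1 g1 = xs h2 g2" using A(6) B(6) k_def kB by simp
      have "pos h1 = pos h2"
      proof (rule ccontr)
        assume ne: "pos h1 \<noteq> pos h2"
        show False
        proof (cases "pos h1 < pos h2")
          case True
          have "pos h2 < pos g1" using B(3) A(4) k_def kB by simp
          moreover have "pres h2 (xs h1 g1 - 1)" using B(7) xeq by simp
          ultimately have "pos k \<le> pos h2" using A(5)[OF VB(1) _ True] k_def by simp
          then show False using B(3) kB by simp
        next
          case False then have "pos h2 < pos h1" using ne by simp
          have "pos h1 < pos g2" using A(3) B(4) k_def kB by simp
          moreover have "pres h1 (xs h2 g2 - 1)" using A(7) xeq by simp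
          ultimately have "pos k \<le> pos h1" using B(5)[OF VA(1) _ \<open>pos h2 < pos h1\<close>] kB by simp
          then show False using A(3) k_def by simp
        qed
      qed
      then have hh: "h1 = h2" using disjR[of h1 h2 "xs h1 g1 - 1"] VA(1) VB(1) A(7) B(7) xeq by simp
      have "g1 = g2" using ok_g_unique[of g1 g2 h1 "xs h1 g1"] VA VB hh xeq by simp
      then show "p = q" using pq hh by simp
    qed
    show "(\<lambda>p. kk (fst p) (snd p)) ` ?T3 \<subseteq> R"
    proof (rule image_subsetI)
      fix p assume p: "p \<in> ?T3"
      obtain h g where pq: "p = (h,g)" by (metis prod.collapse)
      have "(h,g) \<in> Vis" "xs h g \<noteq> lo h" "xs h g \<noteq> lo g" using p pq by auto
      then show "kk (fst p) (snd p) \<in> R" using T3_facts(1) pq by simp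
    qed
  qed
  have "card Vis \<le> card (?T1 \<union> ?T2) + card ?T3" by (subst U) (rule card_Un_le)
  also have "\<dots> \<le> card ?T1 + card ?T2 + card ?T3" using card_Un_le by simp
  finally show ?thesis using c1 c2 c3 by simp
qed

end



context fam begin

definition prv :: "seg \<Rightarrow> seg \<Rightarrow> seg" where
  "prv h c = (SOME p. p\<in>C \<and> cr h p \<and> pos p < pos c \<and> (\<forall>c'\<in>C. cr h c' \<and> pos c' < pos c \<longrightarrow> pos c' \<le> pos p))"

definition bef :: "seg \<Rightarrow> seg \<Rightarrow> bool" where
  "bef h c \<longleftrightarrow> (\<exists>c'\<in>C. cr h c' \<and> pos c' < pos c)"

lemma prv_facts: assumes "bef h c"
  shows "prv h c \<in> C" "cr h (prv h c)" "pos (prv h c) < pos c"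
    "\<And>c'. c'\<in>C \<Longrightarrow> cr h c' \<Longrightarrow> pos c' < pos c \<Longrightarrow> pos c' \<le> pos (prv h c)"
proof -
  let ?S = "{c'\<in>C. cr h c' \<and> pos c' < pos c}"
  have fin: "finite ?S" using finC by simp
  have ne: "?S \<noteq> {}" using assms by (auto simp: bef_def)
  have "Max (pos ` ?S) \<in> pos ` ?S" using fin ne by (intro Max_in) auto
  then obtain p0 where p0: "p0 \<in> ?S" "pos p0 = Max (pos ` ?S)" by auto
  have "\<exists>p. p\<in>C \<and> cr h p \<and> pos p < pos c \<and> (\<forall>c'\<in>C. cr h c' \<and> pos c' < pos c \<longrightarrow> pos c' \<le> pos p)"
    using p0 fin by (intro exI[of _ p0]) auto
  then have "prv h c\<in>C \<and> cr h (prv h c) \<and> pos (prv h c) < pos c \<and> (\<forall>c'\<in>C. cr h c' \<and> pos c' < pos c \<longrightarrow> pos c' \<le> pos (prv h c))"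
    unfolding prv_def by (rule someI_ex)
  then show "prv h c \<in> C" "cr h (prv h c)" "pos (prv h c) < pos c"
    "\<And>c'. c'\<in>C \<Longrightarrow> cr h c' \<Longrightarrow> pos c' < pos c \<Longrightarrow> pos c' \<le> pos (prv h c)" by auto
qed

definition St :: "(seg \<times> seg) set" where
  "St = {(h,c). h\<in>R \<and> c\<in>C \<and> cr h c \<and> nxt h c \<noteq> None \<and> \<not>(\<exists>c'\<in>C. cr h c' \<and> pos c' < pos c \<and> sim h c' c)}"

lemma Rd_sub: "Rd \<subseteq> (\<lambda>(h,c). run h c) ` St"
proof
  fix r assume "r \<in> Rd"
  then obtain h w where hw: "r = run h w" "h\<in>R" "w\<in>C" "cr h w" "nxt h w \<noteq> None" by (auto simp: Rd_def)
  obtain c1 where c1: "c1\<in>cls h w" "pos c1 = lo (run h w)" using run_lo_in[OF hw(3,4)] by blast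
  have cc: "c1\<in>C" "cr h c1" "sim h c1 w" using cls_sim[OF c1(1)] by auto
  have re: "run h c1 = run h w" using run_eq[OF hw(3,4) cc] .
  have ne: "nxt h c1 = nxt h w" using sim_lab[OF cc(3) hw(3,4)] by simp
  have "(h,c1) \<in> St"
  proof -
    have "\<not>(\<exists>c'\<in>C. cr h c' \<and> pos c' < pos c1 \<and> sim h c' c1)"
    proof
      assume "\<exists>c'\<in>C. cr h c' \<and> pos c' < pos c1 \<and> sim h c' c1"
      then obtain c' where c': "c'\<in>C" "cr h c'" "pos c' < pos c1" "sim h c' c1" by blast
      have "sim h c' w" using sim_trans[OF c'(4) cc(3) cc(1,2)] .
      then have "c' \<in> cls h w" using c' by (simp add: cls_def)
      then have "lo (run h w) \<le> pos c'" using cls_fin by (simp add: run_def)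
      then show False using c1(2) c'(3) by simp
    qed
    then show ?thesis using hw cc ne by (simp add: St_def)
  qed
  then show "r \<in> (\<lambda>(h,c). run h c) ` St" using re hw(1) by force
qed

lemma prv_diff: assumes "(h,c) \<in> St" "bef h c" shows "nxt h (prv h c) \<noteq> nxt h c"
proof
  assume eq: "nxt h (prv h c) = nxt h c"
  note P = prv_facts[OF assms(2)]
  have c: "c\<in>C" "cr h c" using assms(1) by (auto simp: St_def)
  have "sim h (prv h c) c" unfolding sim_def
  proof (intro ballI impI)
    fix d assume d: "d\<in>C" "cr h d \<and> min (pos (prv h c)) (pos c) \<le> pos d \<and> pos d \<le> max (pos (prv h c)) (pos c)"
    show "nxt h d = nxt h (prv h c)"
    proof (cases "pos d < pos c")
      case True
      then have "pos d \<le> pos (prv h c)" using P(4)[of d] d by auto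
      then have "pos d = pos (prv h c)" using d P(3) by auto
      then have "d = prv h c" using injC d P(1) by auto
      then show ?thesis by simp
    next
      case False
      then have "pos d = pos c" using d P(3) by auto
      then have "d = c" using injC d c by auto
      then show ?thesis using eq by simp
    qed
  qed
  then show False using assms(1) P(1,2,3) by (auto simp: St_def)
qed

lemma keyb: assumes "(h,c) \<in> St" "bef h c" "nxt h c = Some g" "nxt h (prv h c) = Some gm" "pos g \<le> pos gm"
  shows "pos (prv h c) < lo g"
proof (rule ccontr)
  assume "\<not> pos (prv h c) < lo g"
  then have l: "lo g \<le> pos (prv h c)" by simp
  note P = prv_facts[OF assms(2)]
  have hR: "h\<in>R" "cr h c" using assms(1) by (auto simp: St_def)
  note G = nxt_Some[OF assms(3)] and GM = nxt_Some[OF assms(4)]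
  have "cr g (prv h c)" using l P(2,3) G(2,3) GM(2) assms(5) by (auto simp: cr_def)
  then have "pos gm \<le> pos g" using GM(4)[OF G(1)] G(3) by simp
  then have "pos g = pos gm" using assms(5) by simp
  then have "g = gm" using rows_eq_cr[OF G(1) GM(1) \<open>cr g (prv h c)\<close> GM(2)] by simp
  then show False using prv_diff[OF assms(1,2)] assms(3,4) by simp
qed

lemma keyc: assumes "(h,c) \<in> St" "bef h c" "nxt h c = Some g" "nxt h (prv h c) = Some gm" "pos gm < pos g"
  shows "hi gm < pos c"
proof (rule ccontr)
  assume "\<not> hi gm < pos c"
  then have l: "pos c \<le> hi gm" by simp
  note P = prv_facts[OF assms(2)]
  have hR: "h\<in>R" "cr h c" using assms(1) by (auto simp: St_def)
  note G = nxt_Some[OF assms(3)] and GM = nxt_Some[OF assms(4)]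
  have "cr gm c" using l P(3) GM(2,3) G(2) hR(2) assms(5) by (auto simp: cr_def)
  then have "pos g \<le> pos gm" using G(4)[OF GM(1)] GM(3) by simp
  then show False using assms(5) by simp
qed

lemma case_sub: "{(x,y). (x,y)\<in>A \<and> P x y} \<subseteq> A" by auto

lemma St_card: "card St \<le> card R + card C + 2 * card Vis"
proof -
  let ?S1 = "{(h,c)\<in>St. \<not> bef h c}"
  let ?S2a = "{(h,c)\<in>St. bef h c \<and> nxt h (prv h c) = None}"
  let ?S2b = "{(h,c)\<in>St. bef h c \<and> (\<exists>g gm. nxt h c = Some g \<and> nxt h (prv h c) = Some gm \<and> pos g \<le> pos gm)}"
  let ?S2c = "{(h,c)\<in>St. bef h c \<and> (\<exists>g gm. nxt h c = Some g \<and> nxt h (prv h c) = Some gm \<and> pos gm < pos g)}"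
  have finV: "finite Vis"
    by (rule finite_subset[of _ "R \<times> R"]) (use finR nxt_Some in \<open>auto simp: Vis_def\<close>)
  have U: "St \<subseteq> ?S1 \<union> ?S2a \<union> ?S2b \<union> ?S2c"
  proof
    fix p assume p: "p \<in> St"
    obtain h c where pq: "p = (h,c)" by (metis prod.collapse)
    obtain g where g: "nxt h c = Some g" using p pq by (auto simp: St_def)
    show "p \<in> ?S1 \<union> ?S2a \<union> ?S2b \<union> ?S2c"
    proof (cases "bef h c")
      case False then show ?thesis using p pq by auto
    next
      case True
      show ?thesis
      proof (cases "nxt h (prv h c)")
        case None then show ?thesis using p pq True by auto
      next
        case (Some gm)
        show ?thesis
        proof (cases "pos g \<le> pos gm")
          case True then show ?thesis using p pq \<open>bef h c\<close> g Some by auto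
        next
          case False then show ?thesis using p pq \<open>bef h c\<close> g Some by auto
        qed
      qed
    qed
  qed
  have c1: "card ?S1 \<le> card R"
  proof (rule card_inj_on_le[OF _ _ finR])
    show "inj_on fst ?S1"
    proof (rule inj_onI)
      fix p q assume p: "p \<in> ?S1" and q: "q \<in> ?S1" and e: "fst p = fst q"
      obtain h c1 c2 where pq: "p = (h,c1)" "q = (h,c2)" using e by (metis prod.collapse)
      have A: "c1\<in>C" "cr h c1" "\<not> bef h c1" using p pq by (auto simp: St_def)
      have B: "c2\<in>C" "cr h c2" "\<not> bef h c2" using q pq by (auto simp: St_def)
      have "\<not> pos c1 < pos c2" using A B(3) by (auto simp: bef_def)
      moreover have "\<not> pos c2 < pos c1" using B A(3) by (auto simp: bef_def)
      ultimately have "c1 = c2" using injC A B by simp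
      then show "p = q" using pq by simp
    qed
    show "fst ` ?S1 \<subseteq> R" by (auto simp: St_def)
  qed
  have c2: "card ?S2a \<le> card C"
  proof (rule card_inj_on_le[OF _ _ finC])
    show "inj_on (\<lambda>(h,c). prv h c) ?S2a"
    proof (rule inj_onI)
      fix p q assume p: "p \<in> ?S2a" and q: "q \<in> ?S2a" and e: "(\<lambda>(h,c). prv h c) p = (\<lambda>(h,c). prv h c) q"
      obtain h1 c1 h2 c2 where pq: "p = (h1,c1)" "q = (h2,c2)" by (metis prod.collapse)
      have A: "h1\<in>R" "c1\<in>C" "cr h1 c1" "bef h1 c1" "nxt h1 (prv h1 c1) = None" using p pq by (auto simp: St_def)
      have B: "h2\<in>R" "c2\<in>C" "cr h2 c2" "bef h2 c2" "nxt h2 (prv h2 c2) = None" using q pq by (auto simp: St_def)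
      note PA = prv_facts[OF A(4)] and PB = prv_facts[OF B(4)]
      have pe: "prv h1 c1 = prv h2 c2" using e pq by simp
      have hh: "h1 = h2" using none_unique[OF A(1) B(1) PA(2)] PB(2) A(5) B(5) pe by simp
      have "\<not> pos c1 < pos c2"
      proof
        assume "pos c1 < pos c2"
        then have "pos c1 \<le> pos (prv h2 c2)" using PB(4)[OF A(2)] A(3) hh by simp
        then show False using PA(3) pe by simp
      qed
      moreover have "\<not> pos c2 < pos c1"
      proof
        assume "pos c2 < pos c1"
        then have "pos c2 \<le> pos (prv h1 c1)" using PA(4)[OF B(2)] B(3) hh by simp
        then show False using PB(3) pe by simp
      qed
      ultimately have "c1 = c2" using injC A B by simp
      then show "p = q" using pq hh by simp
    qed
    show "(\<lambda>(h,c). prv h c) ` ?S2a \<subseteq> C" using prv_facts(1) by auto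
  qed
  have c3: "card ?S2b \<le> card Vis"
  proof (rule card_inj_on_le[OF _ _ finV])
    show "inj_on (\<lambda>(h,c). (h, the (nxt h c))) ?S2b"
    proof (rule inj_onI)
      fix p q assume p: "p \<in> ?S2b" and q: "q \<in> ?S2b" and e: "(\<lambda>(h,c). (h, the (nxt h c))) p = (\<lambda>(h,c). (h, the (nxt h c))) q"
      obtain h1 c1 h2 c2 where pq: "p = (h1,c1)" "q = (h2,c2)" by (metis prod.collapse)
      have hh: "h1 = h2" using e pq by simp
      obtain g1 gm1 where A: "(h1,c1)\<in>St" "bef h1 c1" "nxt h1 c1 = Some g1" "nxt h1 (prv h1 c1) = Some gm1" "pos g1 \<le> pos gm1"
        using p pq by auto
      obtain g2 gm2 where B: "(h2,c2)\<in>St" "bef h2 c2" "nxt h2 c2 = Some g2" "nxt h2 (prv h2 c2) = Some gm2" "pos g2 \<le> pos gm2"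
        using q pq by auto
      have gg: "g1 = g2" using e pq A(3) B(3) by simp
      have ka: "pos (prv h1 c1) < lo g1" using keyb[OF A] .
      have kb: "pos (prv h2 c2) < lo g2" using keyb[OF B] .
      have CA: "c1\<in>C" "cr h1 c1" using A(1) by (auto simp: St_def)
      have CB: "c2\<in>C" "cr h2 c2" using B(1) by (auto simp: St_def)
      have ga: "lo g1 \<le> pos c1" using nxt_Some(2)[OF A(3)] by (simp add: cr_def)
      have gb: "lo g2 \<le> pos c2" using nxt_Some(2)[OF B(3)] by (simp add: cr_def)
      have "\<not> pos c1 < pos c2"
      proof
        assume "pos c1 < pos c2"
        then have "pos c1 \<le> pos (prv h2 c2)" using prv_facts(4)[OF B(2) CA(1)] CA(2) hh by simp
        then show False using kb ga gg by simp
      qed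
      moreover have "\<not> pos c2 < pos c1"
      proof
        assume "pos c2 < pos c1"
        then have "pos c2 \<le> pos (prv h1 c1)" using prv_facts(4)[OF A(2) CB(1)] CB(2) hh by simp
        then show False using ka gb gg by simp
      qed
      ultimately have "c1 = c2" using injC CA CB by simp
      then show "p = q" using pq hh by simp
    qed
    show "(\<lambda>(h,c). (h, the (nxt h c))) ` ?S2b \<subseteq> Vis" by (auto simp: Vis_def St_def)
  qed
  have c4: "card ?S2c \<le> card Vis"
  proof (rule card_inj_on_le[OF _ _ finV])
    show "inj_on (\<lambda>(h,c). (h, the (nxt h (prv h c)))) ?S2c"
    proof (rule inj_onI)
      fix p q assume p: "p \<in> ?S2c" and q: "q \<in> ?S2c" and e: "(\<lambda>(h,c). (h, the (nxt h (prv h c)))) p = (\<lambda>(h,c). (h, the (nxt h (prv h c)))) q"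
      obtain h1 c1 h2 c2 where pq: "p = (h1,c1)" "q = (h2,c2)" by (metis prod.collapse)
      have hh: "h1 = h2" using e pq by simp
      obtain g1 gm1 where A: "(h1,c1)\<in>St" "bef h1 c1" "nxt h1 c1 = Some g1" "nxt h1 (prv h1 c1) = Some gm1" "pos gm1 < pos g1"
        using p pq by auto
      obtain g2 gm2 where B: "(h2,c2)\<in>St" "bef h2 c2" "nxt h2 c2 = Some g2" "nxt h2 (prv h2 c2) = Some gm2" "pos gm2 < pos g2"
        using q pq by auto
      have gg: "gm1 = gm2" using e pq A(4) B(4) by simp
      have ka: "hi gm1 < pos c1" using keyc[OF A] .
      have kb: "hi gm2 < pos c2" using keyc[OF B] .
      have CA: "c1\<in>C" "cr h1 c1" using A(1) by (auto simp: St_def)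
      have CB: "c2\<in>C" "cr h2 c2" using B(1) by (auto simp: St_def)
      have ga: "pos (prv h1 c1) \<le> hi gm1" using nxt_Some(2)[OF A(4)] by (simp add: cr_def)
      have gb: "pos (prv h2 c2) \<le> hi gm2" using nxt_Some(2)[OF B(4)] by (simp add: cr_def)
      have "\<not> pos c1 < pos c2"
      proof
        assume "pos c1 < pos c2"
        then have "pos c1 \<le> pos (prv h2 c2)" using prv_facts(4)[OF B(2) CA(1)] CA(2) hh by simp
        then show False using ka gb gg by simp
      qed
      moreover have "\<not> pos c2 < pos c1"
      proof
        assume "pos c2 < pos c1"
        then have "pos c2 \<le> pos (prv h1 c1)" using prv_facts(4)[OF A(2) CB(1)] CB(2) hh by simp
        then show False using kb ga gg by simp
      qed
      ultimately have "c1 = c2" using injC CA CB by simp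
      then show "p = q" using pq hh by simp
    qed
    show "(\<lambda>(h,c). (h, the (nxt h (prv h c)))) ` ?S2c \<subseteq> Vis"
    proof (rule image_subsetI)
      fix p assume p: "p \<in> ?S2c"
      obtain h c where pq: "p = (h,c)" by (metis prod.collapse)
      obtain g gm where A: "(h,c)\<in>St" "bef h c" "nxt h (prv h c) = Some gm" using p pq by auto
      have "h \<in> R" using A(1) by (simp add: St_def)
      then show "(\<lambda>(h,c). (h, the (nxt h (prv h c)))) p \<in> Vis"
        using pq A prv_facts(1,2)[OF A(2)] unfolding Vis_def by auto
    qed
  qed
  have finSt: "finite St" by (rule finite_subset[of _ "R \<times> C"]) (use finR finC in \<open>auto simp: St_def\<close>)
  have "?S1 \<union> ?S2a \<union> ?S2b \<union> ?S2c \<subseteq> St"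
    by (intro Un_least case_sub)
  then have "finite (?S1 \<union> ?S2a \<union> ?S2b \<union> ?S2c)" by (rule finite_subset[OF _ finSt])
  then have "card St \<le> card (?S1 \<union> ?S2a \<union> ?S2b \<union> ?S2c)"
    by (rule card_mono[OF _ U])
  also have "\<dots> \<le> card (?S1 \<union> ?S2a \<union> ?S2b) + card ?S2c" by (rule card_Un_le)
  also have "\<dots> \<le> card (?S1 \<union> ?S2a) + card ?S2b + card ?S2c"
    using card_Un_le[of "?S1 \<union> ?S2a" ?S2b] by linarith
  also have "\<dots> \<le> card ?S1 + card ?S2a + card ?S2b + card ?S2c"
    using card_Un_le[of ?S1 ?S2a] by linarith
  finally show ?thesis using c1 c2 c3 c4 by linarith
qed

lemma Rd_card: "card Rd \<le> 7 * card R + card C"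
proof -
  have finSt: "finite St" by (rule finite_subset[of _ "R \<times> C"]) (use finR finC in \<open>auto simp: St_def\<close>)
  have "card Rd \<le> card ((\<lambda>(h,c). run h c) ` St)" by (rule card_mono) (use finSt Rd_sub in auto)
  also have "\<dots> \<le> card St" by (rule card_image_le[OF finSt])
  finally show ?thesis using St_card Vis_card by simp
qed

end

fun FF :: "nat \<Rightarrow> nat \<Rightarrow> nat" where
  "FF t 0 = t" | "FF t (Suc a) = 7 * FF t a + 1"

lemma base_case: assumes "fam R C" "\<not> Kb 1 t R C" shows "XX R C \<le> FF t 0 * (card R + card C)"
proof -
  interpret fam R C by fact
  have row: "card {c\<in>C. cr r c} \<le> t" if "r\<in>R" for r
  proof (rule ccontr)
    assume "\<not> card {c\<in>C. cr r c} \<le> t"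
    then have "t \<le> card {c\<in>C. cr r c}" by simp
    then obtain C' where C': "C' \<subseteq> {c\<in>C. cr r c}" "card C' = t"
      using obtain_subset_with_card_n by metis
    have "Kb 1 t R C" unfolding Kb_def
      by (rule exI[of _ "{r}"]) (use that C' in auto)
    then show False using assms(2) by simp
  qed
  have eq: "{(r,c)\<in>R\<times>C. cr r c} = Sigma R (\<lambda>r. {c\<in>C. cr r c})" by auto
  have "XX R C = (\<Sum>r\<in>R. card {c\<in>C. cr r c})"
    unfolding XX_def eq by (rule card_SigmaI) (use finR finC in auto)
  also have "\<dots> \<le> (\<Sum>r\<in>R. t)" by (rule sum_mono) (use row in auto)
  also have "\<dots> = t * card R" by simp
  finally show ?thesis by (simp add: algebra_simps)
qed

lemma main_ind: assumes t: "t \<ge> 1"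
  shows "\<forall>R C. fam R C \<longrightarrow> \<not> Kb (Suc a) t R C \<longrightarrow> XX R C \<le> FF t a * (card R + card C)"
proof (induction a)
  case 0 then show ?case using base_case by auto
next
  case (Suc a)
  show ?case
  proof (intro allI impI)
    fix R C assume F: "fam R C" and nK: "\<not> Kb (Suc (Suc a)) t R C"
    interpret fam R C by fact
    have nK': "\<not> Kb (Suc a) t Rd C" using Kext[OF _ t] nK by blast
    have IH: "XX Rd C \<le> FF t a * (card Rd + card C)" using Suc Rd_fam nK' by blast
    have "FF t a * (card Rd + card C) \<le> FF t a * (7 * card R + card C + card C)"
      by (rule mult_le_mono2) (use Rd_card in simp)
    then have "XX R C \<le> card C + FF t a * (7 * card R + card C + card C)"
      using XX_step IH by linarith
    also have "\<dots> \<le> FF t (Suc a) * (card R + card C)"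
      by (simp add: algebra_simps)
    finally show "XX R C \<le> FF t (Suc a) * (card R + card C)" .
  qed
qed

definition rowseg :: "nat \<Rightarrow> (nat \<Rightarrow> nat \<Rightarrow> bool) \<Rightarrow> nat \<Rightarrow> seg" where
  "rowseg n M i = Seg i (Min {j. j<n \<and> M i j}) (Max {j. j<n \<and> M i j})"
definition colseg :: "nat \<Rightarrow> (nat \<Rightarrow> nat \<Rightarrow> bool) \<Rightarrow> nat \<Rightarrow> seg" where
  "colseg n M j = Seg j (Min {i. i<n \<and> M i j}) (Max {i. i<n \<and> M i j})"

definition RRm where "RRm n M = rowseg n M ` {i. i<n \<and> (\<exists>j<n. M i j)}"
definition CCm where "CCm n M = colseg n M ` {j. j<n \<and> (\<exists>i<n. M i j)}"

lemma fam_m: "fam (RRm n M) (CCm n M)"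
proof
  show "finite (RRm n M)" "finite (CCm n M)" by (auto simp: RRm_def CCm_def)
  show "\<And>r1 r2 x. r1 \<in> RRm n M \<Longrightarrow> r2 \<in> RRm n M \<Longrightarrow> pos r1 = pos r2 \<Longrightarrow> pres r1 x \<Longrightarrow> pres r2 x \<Longrightarrow> r1 = r2"
    by (auto simp: RRm_def rowseg_def)
  show "\<And>c1 c2. c1 \<in> CCm n M \<Longrightarrow> c2 \<in> CCm n M \<Longrightarrow> pos c1 = pos c2 \<Longrightarrow> c1 = c2"
    by (auto simp: CCm_def colseg_def)
qed

lemma cr_m: assumes "i<n" "j<n" "M i j" shows "cr (rowseg n M i) (colseg n M j)"
proof -
  have "Min {j. j<n \<and> M i j} \<le> j" "j \<le> Max {j. j<n \<and> M i j}"
    "Min {i. i<n \<and> M i j} \<le> i" "i \<le> Max {i. i<n \<and> M i j}"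
    using assms by (auto intro!: Min_le Max_ge)
  then show ?thesis by (simp add: cr_def rowseg_def colseg_def)
qed

lemma cr_crosses: assumes "i<n" "j<n" "\<exists>j<n. M i j" "\<exists>i<n. M i j" "cr (rowseg n M i) (colseg n M j)"
  shows "crosses n M i j"
proof -
  let ?A = "{j. j<n \<and> M i j}" and ?B = "{i. i<n \<and> M i j}"
  have fA: "finite ?A" "?A \<noteq> {}" and fB: "finite ?B" "?B \<noteq> {}" using assms(3,4) by auto
  have a: "Min ?A \<in> ?A" "Max ?A \<in> ?A" using fA by (intro Min_in Max_in; simp)+
  have b: "Min ?B \<in> ?B" "Max ?B \<in> ?B" using fB by (intro Min_in Max_in; simp)+
  have le: "Min ?A \<le> j" "j \<le> Max ?A" "Min ?B \<le> i" "i \<le> Max ?B"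
    using assms(5) by (auto simp: cr_def rowseg_def colseg_def)
  show ?thesis
  proof (cases "M i j")
    case True then show ?thesis by (simp add: crosses_def)
  next
    case False
    then have "Min ?A \<noteq> j" "Max ?A \<noteq> j" "Min ?B \<noteq> i" "Max ?B \<noteq> i" using a b by auto
    then have "Min ?A < j" "j < Max ?A" "Min ?B < i" "i < Max ?B" using le by auto
    then show ?thesis unfolding crosses_def using a b
      by (intro disjI2 exI[of _ "Min ?B"] exI[of _ "Max ?B"] exI[of _ "Min ?A"] exI[of _ "Max ?A"]) auto
  qed
qed

theorem theorem3p1:
  fixes t :: nat
  assumes "t > 0"
  shows "\<exists>C :: real. \<forall>(n :: nat) (M :: nat \<Rightarrow> nat \<Rightarrow> bool).
    (\<nexists>R Cs. R \<subseteq> {..<n} \<and> Cs \<subseteq> {..<n} \<and> card R = t \<and> card Cs = t \<and>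
        (\<forall>i\<in>R. \<forall>j\<in>Cs. crosses n M i j))
    \<longrightarrow> real (ones n M) \<le> C * real n"
proof (intro exI allI impI)
  fix n :: nat and M :: "nat \<Rightarrow> nat \<Rightarrow> bool"
  assume nK: "\<nexists>R Cs. R \<subseteq> {..<n} \<and> Cs \<subseteq> {..<n} \<and> card R = t \<and> card Cs = t \<and>
        (\<forall>i\<in>R. \<forall>j\<in>Cs. crosses n M i j)"
  let ?R = "RRm n M" and ?C = "CCm n M"
  have t1: "t \<ge> 1" using assms by simp
  have notK: "\<not> Kb (Suc (t - 1)) t ?R ?C"
  proof
    assume "Kb (Suc (t - 1)) t ?R ?C"
    then obtain R' C' where K: "R' \<subseteq> ?R" "C' \<subseteq> ?C" "card R' = t" "card C' = t"
      "\<forall>r\<in>R'. \<forall>c\<in>C'. cr r c" using t1 unfolding Kb_def by auto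
    have ipR: "inj_on pos ?R" by (rule inj_onI) (auto simp: RRm_def rowseg_def)
    have ipC: "inj_on pos ?C" by (rule inj_onI) (auto simp: CCm_def colseg_def)
    have "card (pos ` R') = t" using K(1,3) inj_on_subset[OF ipR K(1)] card_image by metis
    moreover have "card (pos ` C') = t" using K(2,4) inj_on_subset[OF ipC K(2)] card_image by metis
    moreover have "pos ` R' \<subseteq> {..<n}" using K(1) by (auto simp: RRm_def rowseg_def)
    moreover have "pos ` C' \<subseteq> {..<n}" using K(2) by (auto simp: CCm_def colseg_def)
    moreover have "\<forall>i\<in>pos ` R'. \<forall>j\<in>pos ` C'. crosses n M i j"
    proof (intro ballI)
      fix i j assume i: "i \<in> pos ` R'" and j: "j \<in> pos ` C'"
      obtain r where r: "r\<in>R'" "i = pos r" using i by auto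
      obtain c where c: "c\<in>C'" "j = pos c" using j by auto
      have "r \<in> rowseg n M ` {i. i<n \<and> (\<exists>j<n. M i j)}" using K(1) r(1) unfolding RRm_def by blast
      then obtain i' where i': "r = rowseg n M i'" "i'<n" "\<exists>j<n. M i' j" by blast
      have "c \<in> colseg n M ` {j. j<n \<and> (\<exists>i<n. M i j)}" using K(2) c(1) unfolding CCm_def by blast
      then obtain j' where j': "c = colseg n M j'" "j'<n" "\<exists>i<n. M i j'" by blast
      have "i' = i" "j' = j" using i' j' r c by (auto simp: rowseg_def colseg_def)
      then have ri: "r = rowseg n M i" "i<n" "\<exists>j<n. M i j" and cj: "c = colseg n M j" "j<n" "\<exists>i<n. M i j"
        using i' j' by auto
      have "cr r c" using K(5) r c by auto
      then show "crosses n M i j" using cr_crosses ri cj by auto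
    qed
    ultimately show False using nK by blast
  qed
  have XXb: "XX ?R ?C \<le> FF t (t - 1) * (card ?R + card ?C)"
    using main_ind[OF t1, of "t - 1"] fam_m notK by blast
  have cR: "card ?R \<le> n" unfolding RRm_def
    by (rule order.trans[OF card_image_le]) (auto intro: order.trans[OF card_mono[of "{..<n}"]])
  have cC: "card ?C \<le> n" unfolding CCm_def
    by (rule order.trans[OF card_image_le]) (auto intro: order.trans[OF card_mono[of "{..<n}"]])
  have onesX: "ones n M \<le> XX ?R ?C"
  proof -
    let ?O = "{(i, j). i < n \<and> j < n \<and> M i j}"
    have "inj_on (\<lambda>(i,j). (rowseg n M i, colseg n M j)) ?O"
      by (rule inj_onI) (auto simp: rowseg_def colseg_def)
    moreover have "(\<lambda>(i,j). (rowseg n M i, colseg n M j)) ` ?O \<subseteq> {(r,c)\<in>?R\<times>?C. cr r c}"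
      using cr_m by (auto simp: RRm_def CCm_def)
    moreover have "finite {(r,c)\<in>?R\<times>?C. cr r c}"
      by (rule finite_subset[of _ "?R \<times> ?C"]) (use fam.finR[OF fam_m] fam.finC[OF fam_m] in auto)
    ultimately show ?thesis unfolding ones_def XX_def using card_inj_on_le by blast
  qed
  have "ones n M \<le> FF t (t - 1) * (2 * n)"
  proof -
    have "FF t (t - 1) * (card ?R + card ?C) \<le> FF t (t - 1) * (2 * n)"
      by (rule mult_le_mono2) (use cR cC in simp)
    then show ?thesis using onesX XXb by linarith
  qed
  then have "real (ones n M) \<le> real (FF t (t - 1) * (2 * n))" by (simp only: of_nat_le_iff)
  then show "real (ones n M) \<le> real (2 * FF t (t - 1)) * real n" by (simp add: algebra_simps)
qed


end
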